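(* Let $n\ge 2$. The subgroup of $(n-2)$-decomposable braids in $P_n$, namely $\bigcap_{S\subseteq N,\ |S|=n-2} Q_S$, equals the commutator subgroup $[P_n,P_n]$ of $P_n$.
   Context: $P_n$ denotes the pure braid group on $n$ strands, generated by elements $p_{a,b}$ for $1\le a<b\le n$ subject to the relations: (A) $p_{a,b}p_{a,c}p_{b,c}=p_{a,c}p_{b,c}p_{a,b}=p_{b,c}p_{a,b}p_{a,c}$ for $1\le a<b<c\le n$; (B) $p_{a,b}p_{c,d}=p_{c,d}p_{a,b}$ and $p_{a,d}p_{b,c}=p_{b,c}p_{a,d}$ for $1\le a<b<c<d\le n$; (C) $p_{a,c}p_{b,c}^{-1}p_{b,d}p_{b,c}=p_{b,c}^{-1}p_{b,d}p_{b,c}p_{a,c}$ for $1\le a<b<c<d\le n$. Let $N=\{1,\dots,n\}$. For $S\subseteq N$, $Q_S$ is the subgroup generated by the $p_{a,b}$ with $a\in S$ or $b\in S$ (with $Q_\emptyset$ trivial). A braid is $k$-decomposable if it lies in $Q_S$ for every $S\subseteq N$ with $|S|=k$. *)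

theory Defs
  imports "HOL-Algebra.Algebra"
begin

text \<open>Pure braid group P_n given by its presentation. A letter is a pair
 ((a,b), s): the generator p_{a,b} if s = True, its inverse if s = False.\<close>

type_synonym letter = "(nat \<times> nat) \<times> bool"

definition pb_gens :: "nat \<Rightarrow> (nat \<times> nat) set" where
  "pb_gens n = {(a,b). 1 \<le> a \<and> a < b \<and> b \<le> n}"

definition pg :: "nat \<Rightarrow> nat \<Rightarrow> letter" where "pg a b = ((a,b), True)"
definition pgi :: "nat \<Rightarrow> nat \<Rightarrow> letter" where "pgi a b = ((a,b), False)"

definition linv :: "letter \<Rightarrow> letter" where "linv x = (fst x, \<not> snd x)"

inductive pb_rel :: "nat \<Rightarrow> letter list \<Rightarrow> letter list \<Rightarrow> bool" for n where
  A1: "1 \<le> a \<Longrightarrow> a < b \<Longrightarrow> b < c \<Longrightarrow> c \<le> n \<Longrightarrow>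
       pb_rel n [pg a b, pg a c, pg b c] [pg a c, pg b c, pg a b]"
| A2: "1 \<le> a \<Longrightarrow> a < b \<Longrightarrow> b < c \<Longrightarrow> c \<le> n \<Longrightarrow>
       pb_rel n [pg a c, pg b c, pg a b] [pg b c, pg a b, pg a c]"
| B1: "1 \<le> a \<Longrightarrow> a < b \<Longrightarrow> b < c \<Longrightarrow> c < d \<Longrightarrow> d \<le> n \<Longrightarrow>
       pb_rel n [pg a b, pg c d] [pg c d, pg a b]"
| B2: "1 \<le> a \<Longrightarrow> a < b \<Longrightarrow> b < c \<Longrightarrow> c < d \<Longrightarrow> d \<le> n \<Longrightarrow>
       pb_rel n [pg a d, pg b c] [pg b c, pg a d]"
| C: "1 \<le> a \<Longrightarrow> a < b \<Longrightarrow> b < c \<Longrightarrow> c < d \<Longrightarrow> d \<le> n \<Longrightarrow>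
       pb_rel n [pg a c, pgi b c, pg b d, pg b c] [pgi b c, pg b d, pg b c, pg a c]"

inductive pb_eq :: "nat \<Rightarrow> letter list \<Rightarrow> letter list \<Rightarrow> bool" for n where
  refl: "pb_eq n w w"
| sym: "pb_eq n u v \<Longrightarrow> pb_eq n v u"
| trans: "pb_eq n u v \<Longrightarrow> pb_eq n v w \<Longrightarrow> pb_eq n u w"
| cancel: "fst x \<in> pb_gens n \<Longrightarrow> pb_eq n (u @ [x, linv x] @ v) (u @ v)"
| rel: "pb_rel n l r \<Longrightarrow> pb_eq n (u @ l @ v) (u @ r @ v)"

definition pb_words :: "nat \<Rightarrow> letter list set" where
  "pb_words n = {w. \<forall>x \<in> set w. fst x \<in> pb_gens n}"

definition pb_class :: "nat \<Rightarrow> letter list \<Rightarrow> letter list set" where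
  "pb_class n w = {v. pb_eq n w v}"

definition pb_mult :: "nat \<Rightarrow> letter list set \<Rightarrow> letter list set \<Rightarrow> letter list set" where
  "pb_mult n A B = pb_class n ((SOME u. u \<in> A) @ (SOME v. v \<in> B))"

definition PB :: "nat \<Rightarrow> letter list set monoid" where
  "PB n = \<lparr>carrier = pb_class n ` pb_words n, monoid.mult = pb_mult n, monoid.one = pb_class n []\<rparr>"

definition pbgen :: "nat \<Rightarrow> nat \<Rightarrow> nat \<Rightarrow> letter list set" where
  "pbgen n a b = pb_class n [pg a b]"

definition QS :: "nat \<Rightarrow> nat set \<Rightarrow> letter list set set" where
  "QS n S = generate (PB n) {pbgen n a b | a b. (a,b) \<in> pb_gens n \<and> (a \<in> S \<or> b \<in> S)}"

definition decomposable :: "nat \<Rightarrow> nat \<Rightarrow> letter list set \<Rightarrow> bool" where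
  "decomposable n k x \<longleftrightarrow> x \<in> carrier (PB n) \<and>
     (\<forall>S. S \<subseteq> {1..n} \<and> card S = k \<longrightarrow> x \<in> QS n S)"

end

theory Submission
  imports Defs
begin


lemma pb_eq_ctx: "pb_eq n u v \<Longrightarrow> pb_eq n (w @ u @ z) (w @ v @ z)"
proof (induction rule: pb_eq.induct)
  case (refl w) then show ?case by (rule pb_eq.refl)
next
  case (sym u v) then show ?case by (blast intro: pb_eq.sym)
next
  case (trans u v w) then show ?case by (metis pb_eq.trans)
next
  case (cancel x u v) then show ?case using pb_eq.cancel[of x n "w@u" "v@z"] by simp
next
  case (rel l r u v) then show ?case using pb_eq.rel[of n l r "w@u" "v@z"] by simp
qed

lemma pb_eq_app: "pb_eq n u u' \<Longrightarrow> pb_eq n v v' \<Longrightarrow> pb_eq n (u @ v) (u' @ v')"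
proof -
  assume a: "pb_eq n u u'" and b: "pb_eq n v v'"
  have 1: "pb_eq n ([] @ u @ v) ([] @ u' @ v)" by (rule pb_eq_ctx[OF a])
  have 2: "pb_eq n (u' @ v @ []) (u' @ v' @ [])" by (rule pb_eq_ctx[OF b])
  show ?thesis using pb_eq.trans[of n "u @ v" "u' @ v" "u' @ v'"] 1 2 by simp
qed

lemma pb_class_eq: "pb_class n u = pb_class n v \<longleftrightarrow> pb_eq n u v"
proof
  assume "pb_class n u = pb_class n v"
  then have "v \<in> pb_class n u" by (simp add: pb_class_def pb_eq.refl)
  then show "pb_eq n u v" by (simp add: pb_class_def)
next
  assume h: "pb_eq n u v"
  have "pb_eq n u = pb_eq n v"
  proof (rule ext)
    fix x show "pb_eq n u x = pb_eq n v x" using h pb_eq.sym pb_eq.trans by metis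
  qed
  then show "pb_class n u = pb_class n v" unfolding pb_class_def by simp
qed

lemma pb_class_mem: "v \<in> pb_class n u \<longleftrightarrow> pb_eq n u v"
  by (simp add: pb_class_def)

lemma pb_mult_class: "pb_mult n (pb_class n u) (pb_class n v) = pb_class n (u @ v)"
proof -
  have a: "(SOME x. x \<in> pb_class n u) \<in> pb_class n u"
    by (rule someI[of _ u]) (simp add: pb_class_mem pb_eq.refl)
  have b: "(SOME x. x \<in> pb_class n v) \<in> pb_class n v"
    by (rule someI[of _ v]) (simp add: pb_class_mem pb_eq.refl)
  show ?thesis unfolding pb_mult_def pb_class_eq
    using a b pb_eq_app pb_eq.sym unfolding pb_class_mem by blast
qed

definition winv :: "letter list \<Rightarrow> letter list" where
  "winv w = rev (map linv w)"

lemma linv_linv[simp]: "linv (linv x) = x" by (simp add: linv_def)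
lemma fst_linv[simp]: "fst (linv x) = fst x" by (simp add: linv_def)

lemma winv_cancel: "w \<in> pb_words n \<Longrightarrow> pb_eq n (winv w @ w) []"
proof (induction w)
  case Nil then show ?case by (simp add: winv_def pb_eq.refl)
next
  case (Cons x w)
  have xw: "fst x \<in> pb_gens n" "w \<in> pb_words n" using Cons.prems by (auto simp: pb_words_def)
  have "winv (x # w) @ x # w = winv w @ [linv x, linv (linv x)] @ w" by (simp add: winv_def)
  moreover have "pb_eq n (winv w @ [linv x, linv (linv x)] @ w) (winv w @ w)"
    by (rule pb_eq.cancel) (simp add: xw)
  ultimately show ?case using Cons.IH[OF xw(2)] pb_eq.trans by metis
qed

lemma winv_words: "w \<in> pb_words n \<Longrightarrow> winv w \<in> pb_words n"
  by (auto simp: pb_words_def winv_def)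

lemma words_app: "u \<in> pb_words n \<Longrightarrow> v \<in> pb_words n \<Longrightarrow> u @ v \<in> pb_words n"
  by (auto simp: pb_words_def)

lemma PB_carrier: "x \<in> carrier (PB n) \<longleftrightarrow> (\<exists>w \<in> pb_words n. x = pb_class n w)"
  by (auto simp: PB_def)

lemma PB_mult: "pb_class n u \<otimes>\<^bsub>PB n\<^esub> pb_class n v = pb_class n (u @ v)"
  by (simp add: PB_def pb_mult_class)

lemma PB_one: "\<one>\<^bsub>PB n\<^esub> = pb_class n []"
  by (simp add: PB_def)

lemma PB_group: "group (PB n)"
proof (rule groupI)
  show "\<one>\<^bsub>PB n\<^esub> \<in> carrier (PB n)" unfolding PB_one PB_carrier
    by (auto simp: pb_words_def intro!: exI[of _ "[]"])
next
  fix x y assume "x \<in> carrier (PB n)" "y \<in> carrier (PB n)"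
  then show "x \<otimes>\<^bsub>PB n\<^esub> y \<in> carrier (PB n)" unfolding PB_carrier
    using PB_mult words_app by blast
next
  fix x y z assume "x \<in> carrier (PB n)" "y \<in> carrier (PB n)" "z \<in> carrier (PB n)"
  then show "x \<otimes>\<^bsub>PB n\<^esub> y \<otimes>\<^bsub>PB n\<^esub> z = x \<otimes>\<^bsub>PB n\<^esub> (y \<otimes>\<^bsub>PB n\<^esub> z)"
    unfolding PB_carrier by (auto simp: PB_mult)
next
  fix x assume "x \<in> carrier (PB n)"
  then show "\<one>\<^bsub>PB n\<^esub> \<otimes>\<^bsub>PB n\<^esub> x = x"
    unfolding PB_carrier by (auto simp: PB_mult PB_one)
next
  fix x assume "x \<in> carrier (PB n)"
  then obtain w where w: "w \<in> pb_words n" "x = pb_class n w" unfolding PB_carrier by blast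
  show "\<exists>y\<in>carrier (PB n). y \<otimes>\<^bsub>PB n\<^esub> x = \<one>\<^bsub>PB n\<^esub>"
    apply (rule bexI[of _ "pb_class n (winv w)"])
    using w winv_cancel[OF w(1)] winv_words[OF w(1)]
    by (auto simp: PB_mult PB_one pb_class_eq PB_carrier intro: pb_eq.refl)
qed

lemma PB_inv: "w \<in> pb_words n \<Longrightarrow> inv\<^bsub>PB n\<^esub> (pb_class n w) = pb_class n (winv w)"
proof -
  assume w: "w \<in> pb_words n"
  interpret group "PB n" by (rule PB_group)
  have c1: "pb_class n w \<in> carrier (PB n)" using w by (auto simp: PB_carrier)
  have c2: "pb_class n (winv w) \<in> carrier (PB n)" using winv_words[OF w] by (auto simp: PB_carrier)
  have e: "pb_class n (winv w) \<otimes>\<^bsub>PB n\<^esub> pb_class n w = \<one>\<^bsub>PB n\<^esub>"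
    unfolding PB_mult PB_one pb_class_eq by (rule winv_cancel[OF w])
  show ?thesis using inv_equality[OF e c1 c2] .
qed



context group begin

lemma cancel_l1 [simp]: "x \<in> carrier G \<Longrightarrow> y \<in> carrier G \<Longrightarrow> x \<otimes> (inv x \<otimes> y) = y"
  by (simp add: m_assoc[symmetric])
lemma cancel_l2 [simp]: "x \<in> carrier G \<Longrightarrow> y \<in> carrier G \<Longrightarrow> inv x \<otimes> (x \<otimes> y) = y"
  by (simp add: m_assoc[symmetric])

lemma tri:
  assumes c: "x \<in> carrier G" "y \<in> carrier G" "z \<in> carrier G"
    and Q: "subgroup Q G" "y \<in> Q" "z \<in> Q"
    and r1: "x \<otimes> y \<otimes> z = y \<otimes> z \<otimes> x" and r2: "y \<otimes> z \<otimes> x = z \<otimes> x \<otimes> y"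
  shows "x \<otimes> y \<otimes> inv x \<in> Q" "x \<otimes> z \<otimes> inv x \<in> Q" "inv x \<otimes> y \<otimes> x \<in> Q" "inv x \<otimes> z \<otimes> x \<in> Q"
proof -
  interpret Q: subgroup Q G by (rule Q(1))
  have e1: "x \<otimes> y \<otimes> inv x = inv z \<otimes> y \<otimes> z"
    using arg_cong[OF r2, of "\<lambda>u. inv z \<otimes> u \<otimes> inv x"] c by (simp add: m_assoc)
  show 1: "x \<otimes> y \<otimes> inv x \<in> Q" unfolding e1 using Q by (simp add: Q.m_inv_closed)
  have e2: "x \<otimes> (y \<otimes> z) \<otimes> inv x = y \<otimes> z"
    using arg_cong[OF r1, of "\<lambda>u. u \<otimes> inv x"] c by (simp add: m_assoc)
  have e2': "x \<otimes> z \<otimes> inv x = inv (x \<otimes> y \<otimes> inv x) \<otimes> (x \<otimes> (y \<otimes> z) \<otimes> inv x)"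
    using c by (simp add: m_assoc inv_mult_group)
  show "x \<otimes> z \<otimes> inv x \<in> Q" unfolding e2' e2 using Q 1 by (simp add: Q.m_inv_closed)
  have r3: "x \<otimes> y \<otimes> z = z \<otimes> x \<otimes> y" using r1 r2 by simp
  have e3: "inv x \<otimes> z \<otimes> x = y \<otimes> z \<otimes> inv y"
    using arg_cong[OF r3, of "\<lambda>u. inv x \<otimes> u \<otimes> inv y"] c by (simp add: m_assoc)
  show 3: "inv x \<otimes> z \<otimes> x \<in> Q" unfolding e3 using Q by (simp add: Q.m_inv_closed)
  have e4: "inv x \<otimes> (y \<otimes> z) \<otimes> x = y \<otimes> z"
    using arg_cong[OF r1[symmetric], of "\<lambda>u. inv x \<otimes> u"] c by (simp add: m_assoc)
  have e4': "inv x \<otimes> y \<otimes> x = (inv x \<otimes> (y \<otimes> z) \<otimes> x) \<otimes> inv (inv x \<otimes> z \<otimes> x)"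
    using c by (simp add: m_assoc inv_mult_group)
  show "inv x \<otimes> y \<otimes> x \<in> Q" unfolding e4' e4 using Q 3 by (simp add: Q.m_inv_closed)
qed

lemma comm_conj:
  assumes c: "t \<in> carrier G" "g \<in> carrier G" and Q: "subgroup Q G" "g \<in> Q"
    and r: "t \<otimes> g = g \<otimes> t"
  shows "t \<otimes> g \<otimes> inv t \<in> Q" "inv t \<otimes> g \<otimes> t \<in> Q"
proof -
  have "t \<otimes> g \<otimes> inv t = g" using arg_cong[OF r, of "\<lambda>u. u \<otimes> inv t"] c by (simp add: m_assoc)
  then show "t \<otimes> g \<otimes> inv t \<in> Q" using Q by simp
  have "inv t \<otimes> g \<otimes> t = g" using arg_cong[OF r, of "\<lambda>u. inv t \<otimes> u"] c by (simp add: m_assoc)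
  then show "inv t \<otimes> g \<otimes> t \<in> Q" using Q by simp
qed

lemma cross_conj:
  assumes c: "t \<in> carrier G" "g \<in> carrier G" "k \<in> carrier G" and Q: "subgroup Q G" "g \<in> Q" "k \<in> Q"
    and r: "t \<otimes> (k \<otimes> g \<otimes> inv k) = (k \<otimes> g \<otimes> inv k) \<otimes> t"
    and k1: "t \<otimes> k \<otimes> inv t \<in> Q" and k2: "inv t \<otimes> k \<otimes> t \<in> Q"
  shows "t \<otimes> g \<otimes> inv t \<in> Q" "inv t \<otimes> g \<otimes> t \<in> Q"
proof -
  interpret Q: subgroup Q G by (rule Q(1))
  let ?w = "k \<otimes> g \<otimes> inv k"
  have wc: "?w \<in> carrier G" using c by simp
  have wQ: "?w \<in> Q" using Q by (simp add: Q.m_inv_closed)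
  have e1: "t \<otimes> g \<otimes> inv t = inv (t \<otimes> k \<otimes> inv t) \<otimes> (t \<otimes> ?w \<otimes> inv t) \<otimes> (t \<otimes> k \<otimes> inv t)"
    using c by (simp add: m_assoc inv_mult_group)
  have f1: "t \<otimes> ?w \<otimes> inv t = ?w" using arg_cong[OF r, of "\<lambda>u. u \<otimes> inv t"] c by (simp add: m_assoc)
  show "t \<otimes> g \<otimes> inv t \<in> Q" unfolding e1 f1 using wQ k1 by (simp add: Q.m_inv_closed)
  have e2: "inv t \<otimes> g \<otimes> t = inv (inv t \<otimes> k \<otimes> t) \<otimes> (inv t \<otimes> ?w \<otimes> t) \<otimes> (inv t \<otimes> k \<otimes> t)"
    using c by (simp add: m_assoc inv_mult_group)
  have f2: "inv t \<otimes> ?w \<otimes> t = ?w" using arg_cong[OF r[symmetric], of "\<lambda>u. inv t \<otimes> u"] c by (simp add: m_assoc)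
  show "inv t \<otimes> g \<otimes> t \<in> Q" unfolding e2 f2 using wQ k2 by (simp add: Q.m_inv_closed)
qed

lemma conj_generate:
  assumes H: "H \<subseteq> carrier G" and t: "t \<in> carrier G"
    and h: "\<And>h. h \<in> H \<Longrightarrow> t \<otimes> h \<otimes> inv t \<in> generate G H \<and> inv t \<otimes> h \<otimes> t \<in> generate G H"
    and q: "q \<in> generate G H"
  shows "t \<otimes> q \<otimes> inv t \<in> generate G H \<and> inv t \<otimes> q \<otimes> t \<in> generate G H"
  using q
proof (induction rule: generate.induct)
  case one then show ?case using t by (simp add: generate.one)
next
  case (incl h) then show ?case using h by blast
next
  case (inv h)
  have hc: "h \<in> carrier G" using inv H by auto
  have "t \<otimes> inv h \<otimes> inv t = inv (t \<otimes> h \<otimes> inv t)" "inv t \<otimes> inv h \<otimes> t = inv (inv t \<otimes> h \<otimes> t)"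
    using hc t by (simp_all add: m_assoc inv_mult_group)
  then show ?case using h[OF inv] generate_m_inv_closed[OF H] by simp
next
  case (eng h1 h2)
  have c: "h1 \<in> carrier G" "h2 \<in> carrier G" using eng generate_in_carrier[OF H] by auto
  have "t \<otimes> (h1 \<otimes> h2) \<otimes> inv t = (t \<otimes> h1 \<otimes> inv t) \<otimes> (t \<otimes> h2 \<otimes> inv t)"
       "inv t \<otimes> (h1 \<otimes> h2) \<otimes> t = (inv t \<otimes> h1 \<otimes> t) \<otimes> (inv t \<otimes> h2 \<otimes> t)"
    using c t by (simp_all add: m_assoc)
  then show ?case using eng generate.eng by metis
qed


lemma tri_y:
  assumes c: "x \<in> carrier G" "y \<in> carrier G" "z \<in> carrier G"
    and Q: "subgroup Q G" "x \<in> Q" "z \<in> Q"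
    and r1: "x \<otimes> y \<otimes> z = y \<otimes> z \<otimes> x" and r2: "y \<otimes> z \<otimes> x = z \<otimes> x \<otimes> y"
  shows "y \<otimes> z \<otimes> inv y \<in> Q" "y \<otimes> x \<otimes> inv y \<in> Q" "inv y \<otimes> z \<otimes> y \<in> Q" "inv y \<otimes> x \<otimes> y \<in> Q"
proof -
  have r3: "z \<otimes> x \<otimes> y = x \<otimes> y \<otimes> z" using r1 r2 by simp
  show "y \<otimes> z \<otimes> inv y \<in> Q" "y \<otimes> x \<otimes> inv y \<in> Q" "inv y \<otimes> z \<otimes> y \<in> Q" "inv y \<otimes> x \<otimes> y \<in> Q"
    using tri[OF c(2,3,1) Q(1,3,2) r2 r3] by auto
qed

lemma tri_z:
  assumes c: "x \<in> carrier G" "y \<in> carrier G" "z \<in> carrier G"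
    and Q: "subgroup Q G" "x \<in> Q" "y \<in> Q"
    and r1: "x \<otimes> y \<otimes> z = y \<otimes> z \<otimes> x" and r2: "y \<otimes> z \<otimes> x = z \<otimes> x \<otimes> y"
  shows "z \<otimes> x \<otimes> inv z \<in> Q" "z \<otimes> y \<otimes> inv z \<in> Q" "inv z \<otimes> x \<otimes> z \<in> Q" "inv z \<otimes> y \<otimes> z \<in> Q"
proof -
  have r3: "z \<otimes> x \<otimes> y = x \<otimes> y \<otimes> z" using r1 r2 by simp
  show "z \<otimes> x \<otimes> inv z \<in> Q" "z \<otimes> y \<otimes> inv z \<in> Q" "inv z \<otimes> x \<otimes> z \<in> Q" "inv z \<otimes> y \<otimes> z \<in> Q"
    using tri[OF c(3,1,2) Q(1,2,3) r3 r1] by auto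
qed

lemma cross_swap:
  assumes c: "t \<in> carrier G" "g \<in> carrier G" "k \<in> carrier G"
    and r: "g \<otimes> (inv k \<otimes> t \<otimes> k) = (inv k \<otimes> t \<otimes> k) \<otimes> g"
  shows "t \<otimes> (k \<otimes> g \<otimes> inv k) = (k \<otimes> g \<otimes> inv k) \<otimes> t"
  using arg_cong[OF r, of "\<lambda>u. k \<otimes> u \<otimes> inv k"] c by (simp add: m_assoc)

lemma inv_conj_mem:
  assumes c: "t \<in> carrier G" "k \<in> carrier G" and Q: "subgroup Q G" "t \<otimes> k \<otimes> inv t \<in> Q"
  shows "t \<otimes> inv k \<otimes> inv t \<in> Q"
proof -
  have "t \<otimes> inv k \<otimes> inv t = inv (t \<otimes> k \<otimes> inv t)" using c by (simp add: m_assoc inv_mult_group)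
  then show ?thesis using Q subgroup.m_inv_closed by metis
qed

end


definition ex :: "nat \<times> nat \<Rightarrow> letter \<Rightarrow> int" where
  "ex p x = (if fst x = p then (if snd x then 1 else -1) else 0)"

definition esum :: "nat \<times> nat \<Rightarrow> letter list \<Rightarrow> int" where
  "esum p w = sum_list (map (ex p) w)"

lemma esum_simps[simp]: "esum p [] = 0" "esum p (x # w) = ex p x + esum p w"
  "esum p (u @ v) = esum p u + esum p v"
  by (simp_all add: esum_def)

lemma ex_linv[simp]: "ex p (linv x) = - ex p x"
  by (simp add: ex_def linv_def)

lemma esum_rel: "pb_rel n l r \<Longrightarrow> esum p l = esum p r"
  by (induction rule: pb_rel.induct) (auto simp: ex_def pg_def pgi_def)

lemma esum_eq: "pb_eq n u v \<Longrightarrow> esum p u = esum p v"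
proof (induction rule: pb_eq.induct)
  case (rel l r u v) then show ?case using esum_rel[OF rel(1), of p] by simp
qed simp_all

locale pbn = fixes n :: nat
begin

sublocale group "PB n" by (rule PB_group)

abbreviation mul (infixl "\<star>" 70) where "x \<star> y \<equiv> x \<otimes>\<^bsub>PB n\<^esub> y"
abbreviation iv where "iv x \<equiv> inv\<^bsub>PB n\<^esub> x"
abbreviation P where "P a b \<equiv> pbgen n a b"
abbreviation cls where "cls w \<equiv> pb_class n w"

lemma cls_carrier: "w \<in> pb_words n \<Longrightarrow> cls w \<in> carrier (PB n)"
  by (auto simp: PB_carrier)

lemma P_carrier: "(a,b) \<in> pb_gens n \<Longrightarrow> P a b \<in> carrier (PB n)"
  unfolding pbgen_def by (rule cls_carrier) (simp add: pb_words_def pg_def)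

lemma P_inv: "(a,b) \<in> pb_gens n \<Longrightarrow> iv (P a b) = cls [pgi a b]"
  unfolding pbgen_def by (subst PB_inv) (simp_all add: pb_words_def pg_def pgi_def winv_def linv_def)

lemma cls_cons: "cls (x # w) = cls [x] \<star> cls w"
  by (simp add: PB_mult)

lemma gens_ord: "(a,b) \<in> pb_gens n \<longleftrightarrow> 1 \<le> a \<and> a < b \<and> b \<le> n"
  by (simp add: pb_gens_def)

lemma relA1: "1 \<le> a \<Longrightarrow> a < b \<Longrightarrow> b < c \<Longrightarrow> c \<le> n \<Longrightarrow>
   P a b \<star> P a c \<star> P b c = P a c \<star> P b c \<star> P a b"
  unfolding pbgen_def PB_mult pb_class_eq using pb_eq.rel[OF pb_rel.A1, of a b c n "[]" "[]"] by simp

lemma relA2: "1 \<le> a \<Longrightarrow> a < b \<Longrightarrow> b < c \<Longrightarrow> c \<le> n \<Longrightarrow>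
   P a c \<star> P b c \<star> P a b = P b c \<star> P a b \<star> P a c"
  unfolding pbgen_def PB_mult pb_class_eq using pb_eq.rel[OF pb_rel.A2, of a b c n "[]" "[]"] by simp

lemma relB1: "1 \<le> a \<Longrightarrow> a < b \<Longrightarrow> b < c \<Longrightarrow> c < d \<Longrightarrow> d \<le> n \<Longrightarrow>
   P a b \<star> P c d = P c d \<star> P a b"
  unfolding pbgen_def PB_mult pb_class_eq using pb_eq.rel[OF pb_rel.B1, of a b c d n "[]" "[]"] by simp

lemma relB2: "1 \<le> a \<Longrightarrow> a < b \<Longrightarrow> b < c \<Longrightarrow> c < d \<Longrightarrow> d \<le> n \<Longrightarrow>
   P a d \<star> P b c = P b c \<star> P a d"
  unfolding pbgen_def PB_mult pb_class_eq using pb_eq.rel[OF pb_rel.B2, of a b c d n "[]" "[]"] by simp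

lemma relC: "1 \<le> a \<Longrightarrow> a < b \<Longrightarrow> b < c \<Longrightarrow> c < d \<Longrightarrow> d \<le> n \<Longrightarrow>
   P a c \<star> (iv (P b c) \<star> P b d \<star> P b c) = (iv (P b c) \<star> P b d \<star> P b c) \<star> P a c"
proof -
  assume h: "1 \<le> a" "a < b" "b < c" "c < d" "d \<le> n"
  have "iv (P b c) = cls [pgi b c]" by (rule P_inv) (use h in \<open>simp add: gens_ord\<close>)
  then show ?thesis
    unfolding pbgen_def PB_mult pb_class_eq using pb_eq.rel[OF pb_rel.C[OF h], of "[]" "[]"]
    by (simp add: pbgen_def PB_mult pb_class_eq)
qed


lemma QS_gens_carrier: "{pbgen n a b | a b. (a,b) \<in> pb_gens n \<and> (a \<in> S \<or> b \<in> S)} \<subseteq> carrier (PB n)"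
  using P_carrier by blast

lemma QS_sub: "subgroup (QS n S) (PB n)"
  unfolding QS_def by (rule generate_is_subgroup[OF QS_gens_carrier])

lemma Q_mem: "(i,j) \<in> pb_gens n \<Longrightarrow> (x,y) \<in> pb_gens n \<Longrightarrow> (x,y) \<noteq> (i,j) \<Longrightarrow>
   P x y \<in> QS n ({1..n} - {i,j})"
  unfolding QS_def
  by (rule generate.incl, rule CollectI, rule exI[of _ x], rule exI[of _ y]) (auto simp: gens_ord)

lemma braid_conj:
  assumes t: "(i,j) \<in> pb_gens n" and g: "(a,b) \<in> pb_gens n" and ne: "(a,b) \<noteq> (i,j)"
  shows "P i j \<star> P a b \<star> iv (P i j) \<in> QS n ({1..n} - {i,j}) \<and>
         iv (P i j) \<star> P a b \<star> P i j \<in> QS n ({1..n} - {i,j})"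
proof -
  define Q where "Q = QS n ({1..n} - {i,j})"
  have Qs: "subgroup Q (PB n)" unfolding Q_def by (rule QS_sub)
  have Qm: "\<And>x y. (x,y) \<in> pb_gens n \<Longrightarrow> (x,y) \<noteq> (i,j) \<Longrightarrow> P x y \<in> Q"
    unfolding Q_def using Q_mem[OF t] by blast
  have Pc: "\<And>x y. (x,y) \<in> pb_gens n \<Longrightarrow> P x y \<in> carrier (PB n)" by (rule P_carrier)
  have o: "1 \<le> i" "i < j" "j \<le> n" "1 \<le> a" "a < b" "b \<le> n" using t g by (auto simp: gens_ord)
  note G = gens_ord
  have tc: "P i j \<in> carrier (PB n)" by (rule Pc[OF t])
  have gc: "P a b \<in> carrier (PB n)" by (rule Pc[OF g])
  have gQ: "P a b \<in> Q" by (rule Qm[OF g ne])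
  have case1: ?thesis if h: "b < i"
  proof -
    have "P a b \<star> P i j = P i j \<star> P a b" by (rule relB1) (use o h in auto)
    then show ?thesis using comm_conj[OF tc gc Qs gQ] unfolding Q_def by simp
  qed
  have case2: ?thesis if h: "j < a"
  proof -
    have "P i j \<star> P a b = P a b \<star> P i j" by (rule relB1) (use o h in auto)
    then show ?thesis using comm_conj[OF tc gc Qs gQ] unfolding Q_def by simp
  qed
  have case3: ?thesis if h: "a < i" "j < b"
  proof -
    have "P a b \<star> P i j = P i j \<star> P a b" by (rule relB2) (use o h in auto)
    then show ?thesis using comm_conj[OF tc gc Qs gQ] unfolding Q_def by simp
  qed
  have case4: ?thesis if h: "i < a" "b < j"
  proof -
    have "P i j \<star> P a b = P a b \<star> P i j" by (rule relB2) (use o h in auto)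
    then show ?thesis using comm_conj[OF tc gc Qs gQ] unfolding Q_def by simp
  qed
  have case5: ?thesis if h: "a < i" "i < b" "b < j"
  proof -
    have g1: "(i,b) \<in> pb_gens n" "(b,j) \<in> pb_gens n" using o h by (auto simp: G)
    have kc: "P i b \<in> carrier (PB n)" by (rule Pc[OF g1(1)])
    have kQ: "P i b \<in> Q" by (rule Qm[OF g1(1)]) (use h o in simp)
    have zc: "P b j \<in> carrier (PB n)" by (rule Pc[OF g1(2)])
    have zQ: "P b j \<in> Q" by (rule Qm[OF g1(2)]) (use h o in simp)
    have rC: "P a b \<star> (iv (P i b) \<star> P i j \<star> P i b) = (iv (P i b) \<star> P i j \<star> P i b) \<star> P a b"
      by (rule relC) (use o h in auto)
    have r: "P i j \<star> (P i b \<star> P a b \<star> iv (P i b)) = (P i b \<star> P a b \<star> iv (P i b)) \<star> P i j"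
      by (rule cross_swap[OF tc gc kc rC])
    have A1: "P i b \<star> P i j \<star> P b j = P i j \<star> P b j \<star> P i b" by (rule relA1) (use o h in auto)
    have A2: "P i j \<star> P b j \<star> P i b = P b j \<star> P i b \<star> P i j" by (rule relA2) (use o h in auto)
    note k = tri_y[OF kc tc zc Qs kQ zQ A1 A2]
    show ?thesis using cross_conj[OF tc gc kc Qs gQ kQ r k(2) k(4)] unfolding Q_def by simp
  qed
  have case6: ?thesis if h: "i < a" "a < j" "j < b"
  proof -
    have g1: "(i,a) \<in> pb_gens n" "(a,j) \<in> pb_gens n" using o h by (auto simp: G)
    have xc: "P i a \<in> carrier (PB n)" by (rule Pc[OF g1(1)])
    have xQ: "P i a \<in> Q" by (rule Qm[OF g1(1)]) (use h o in simp)
    have zc: "P a j \<in> carrier (PB n)" by (rule Pc[OF g1(2)])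
    have zQ: "P a j \<in> Q" by (rule Qm[OF g1(2)]) (use h o in simp)
    have kc: "iv (P a j) \<in> carrier (PB n)" using zc by simp
    have kQ: "iv (P a j) \<in> Q" using zQ Qs subgroup.m_inv_closed by metis
    have rC: "P i j \<star> (iv (P a j) \<star> P a b \<star> P a j) = (iv (P a j) \<star> P a b \<star> P a j) \<star> P i j"
      by (rule relC) (use o h in auto)
    have r: "P i j \<star> (iv (P a j) \<star> P a b \<star> iv (iv (P a j))) = (iv (P a j) \<star> P a b \<star> iv (iv (P a j))) \<star> P i j"
      using rC zc by simp
    have A1: "P i a \<star> P i j \<star> P a j = P i j \<star> P a j \<star> P i a" by (rule relA1) (use o h in auto)
    have A2: "P i j \<star> P a j \<star> P i a = P a j \<star> P i a \<star> P i j" by (rule relA2) (use o h in auto)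
    note k = tri_y[OF xc tc zc Qs xQ zQ A1 A2]
    have k1: "P i j \<star> iv (P a j) \<star> iv (P i j) \<in> Q" by (rule inv_conj_mem[OF tc zc Qs k(1)])
    have k2': "iv (P i j) \<star> iv (P a j) \<star> iv (iv (P i j)) \<in> Q"
      by (rule inv_conj_mem) (use tc zc Qs k(3) in simp_all)
    have k2: "iv (P i j) \<star> iv (P a j) \<star> P i j \<in> Q" using k2' tc by simp
    show ?thesis using cross_conj[OF tc gc kc Qs gQ kQ r k1 k2] unfolding Q_def by simp
  qed
  have case7: ?thesis if h: "a = i" "b < j"
  proof -
    have g1: "(i,b) \<in> pb_gens n" "(b,j) \<in> pb_gens n" using o h by (auto simp: G)
    have xc: "P i b \<in> carrier (PB n)" by (rule Pc[OF g1(1)])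
    have xQ: "P i b \<in> Q" by (rule Qm[OF g1(1)]) (use h o in simp)
    have zc: "P b j \<in> carrier (PB n)" by (rule Pc[OF g1(2)])
    have zQ: "P b j \<in> Q" by (rule Qm[OF g1(2)]) (use h o in simp)
    have A1: "P i b \<star> P i j \<star> P b j = P i j \<star> P b j \<star> P i b" by (rule relA1) (use o h in auto)
    have A2: "P i j \<star> P b j \<star> P i b = P b j \<star> P i b \<star> P i j" by (rule relA2) (use o h in auto)
    note k = tri_y[OF xc tc zc Qs xQ zQ A1 A2]
    show ?thesis using k(2) k(4) h unfolding Q_def by simp
  qed
  have case8: ?thesis if h: "a = i" "j < b"
  proof -
    have g1: "(i,b) \<in> pb_gens n" "(j,b) \<in> pb_gens n" using o h by (auto simp: G)
    have yc: "P i b \<in> carrier (PB n)" by (rule Pc[OF g1(1)])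
    have yQ: "P i b \<in> Q" by (rule Qm[OF g1(1)]) (use h o in simp)
    have zc: "P j b \<in> carrier (PB n)" by (rule Pc[OF g1(2)])
    have zQ: "P j b \<in> Q" by (rule Qm[OF g1(2)]) (use h o in simp)
    have A1: "P i j \<star> P i b \<star> P j b = P i b \<star> P j b \<star> P i j" by (rule relA1) (use o h in auto)
    have A2: "P i b \<star> P j b \<star> P i j = P j b \<star> P i j \<star> P i b" by (rule relA2) (use o h in auto)
    note k = tri[OF tc yc zc Qs yQ zQ A1 A2]
    show ?thesis using k(1) k(3) h unfolding Q_def by simp
  qed
  have case9: ?thesis if h: "b = j" "a < i"
  proof -
    have g1: "(a,i) \<in> pb_gens n" "(a,j) \<in> pb_gens n" using o h by (auto simp: G)
    have xc: "P a i \<in> carrier (PB n)" by (rule Pc[OF g1(1)])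
    have xQ: "P a i \<in> Q" by (rule Qm[OF g1(1)]) (use h o in simp)
    have yc: "P a j \<in> carrier (PB n)" by (rule Pc[OF g1(2)])
    have yQ: "P a j \<in> Q" by (rule Qm[OF g1(2)]) (use h o in simp)
    have A1: "P a i \<star> P a j \<star> P i j = P a j \<star> P i j \<star> P a i" by (rule relA1) (use o h in auto)
    have A2: "P a j \<star> P i j \<star> P a i = P i j \<star> P a i \<star> P a j" by (rule relA2) (use o h in auto)
    note k = tri_z[OF xc yc tc Qs xQ yQ A1 A2]
    show ?thesis using k(2) k(4) h unfolding Q_def by simp
  qed
  have case10: ?thesis if h: "b = j" "i < a"
  proof -
    have g1: "(i,a) \<in> pb_gens n" "(a,j) \<in> pb_gens n" using o h by (auto simp: G)
    have xc: "P i a \<in> carrier (PB n)" by (rule Pc[OF g1(1)])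
    have xQ: "P i a \<in> Q" by (rule Qm[OF g1(1)]) (use h o in simp)
    have zc: "P a j \<in> carrier (PB n)" by (rule Pc[OF g1(2)])
    have zQ: "P a j \<in> Q" by (rule Qm[OF g1(2)]) (use h o in simp)
    have A1: "P i a \<star> P i j \<star> P a j = P i j \<star> P a j \<star> P i a" by (rule relA1) (use o h in auto)
    have A2: "P i j \<star> P a j \<star> P i a = P a j \<star> P i a \<star> P i j" by (rule relA2) (use o h in auto)
    note k = tri_y[OF xc tc zc Qs xQ zQ A1 A2]
    show ?thesis using k(1) k(3) h unfolding Q_def by simp
  qed
  have case11: ?thesis if h: "b = i"
  proof -
    have g1: "(a,i) \<in> pb_gens n" "(a,j) \<in> pb_gens n" using o h by (auto simp: G)
    have xc: "P a i \<in> carrier (PB n)" by (rule Pc[OF g1(1)])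
    have xQ: "P a i \<in> Q" by (rule Qm[OF g1(1)]) (use h o in simp)
    have yc: "P a j \<in> carrier (PB n)" by (rule Pc[OF g1(2)])
    have yQ: "P a j \<in> Q" by (rule Qm[OF g1(2)]) (use h o in simp)
    have A1: "P a i \<star> P a j \<star> P i j = P a j \<star> P i j \<star> P a i" by (rule relA1) (use o h in auto)
    have A2: "P a j \<star> P i j \<star> P a i = P i j \<star> P a i \<star> P a j" by (rule relA2) (use o h in auto)
    note k = tri_z[OF xc yc tc Qs xQ yQ A1 A2]
    show ?thesis using k(1) k(3) h unfolding Q_def by simp
  qed
  have case12: ?thesis if h: "a = j"
  proof -
    have g1: "(i,b) \<in> pb_gens n" "(j,b) \<in> pb_gens n" using o h by (auto simp: G)
    have yc: "P i b \<in> carrier (PB n)" by (rule Pc[OF g1(1)])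
    have yQ: "P i b \<in> Q" by (rule Qm[OF g1(1)]) (use h o in simp)
    have zc: "P j b \<in> carrier (PB n)" by (rule Pc[OF g1(2)])
    have zQ: "P j b \<in> Q" by (rule Qm[OF g1(2)]) (use h o in simp)
    have A1: "P i j \<star> P i b \<star> P j b = P i b \<star> P j b \<star> P i j" by (rule relA1) (use o h in auto)
    have A2: "P i b \<star> P j b \<star> P i j = P j b \<star> P i j \<star> P i b" by (rule relA2) (use o h in auto)
    note k = tri[OF tc yc zc Qs yQ zQ A1 A2]
    show ?thesis using k(2) k(4) h unfolding Q_def by simp
  qed
  have ne': "a \<noteq> i \<or> b \<noteq> j" using ne by simp
  show ?thesis
  proof (cases "a = i")
    case True then have "b \<noteq> j" using ne' by simp
    then show ?thesis using True case7 case8 by (cases "b < j") auto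
  next
    case ai: False
    show ?thesis
    proof (cases "b = j")
      case True then show ?thesis using case9 case10 ai by (cases "a < i") auto
    next
      case bj: False
      show ?thesis
      proof (cases "b = i")
        case True then show ?thesis using case11 by simp
      next
        case bi: False
        show ?thesis
        proof (cases "a = j")
          case True then show ?thesis using case12 by simp
        next
          case aj: False
          show ?thesis
          proof (cases "b < i")
            case True then show ?thesis using case1 by simp
          next
            case nbi: False
            show ?thesis
            proof (cases "j < a")
              case True then show ?thesis using case2 by simp
            next
              case nja: False
              show ?thesis
              proof (cases "a < i")
                case True
                then have "i < b" using nbi bi by simp
                then show ?thesis using True case5 case3 bj by (cases "b < j") auto
              next
                case False
                then have "i < a" "a < j" using ai aj nja by auto
                then show ?thesis using case4 case6 bj by (cases "b < j") auto
              qed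
            qed
          qed
        qed
      qed
    qed
  qed
qed


lemma QS_normal:
  assumes t: "(i,j) \<in> pb_gens n" and q: "q \<in> QS n ({1..n} - {i,j})"
  shows "P i j \<star> q \<star> iv (P i j) \<in> QS n ({1..n} - {i,j}) \<and> iv (P i j) \<star> q \<star> P i j \<in> QS n ({1..n} - {i,j})"
proof -
  define S where "S = {1..n} - {i,j}"
  define Gs where "Gs = {pbgen n a b |a b. (a, b) \<in> pb_gens n \<and> (a \<in> S \<or> b \<in> S)}"
  have QG: "QS n S = generate (PB n) Gs" unfolding QS_def Gs_def ..
  have Gc: "Gs \<subseteq> carrier (PB n)" unfolding Gs_def by (rule QS_gens_carrier)
  have H: "P i j \<star> h \<star> iv (P i j) \<in> generate (PB n) Gs \<and> iv (P i j) \<star> h \<star> P i j \<in> generate (PB n) Gs"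
    if hG: "h \<in> Gs" for h
  proof -
    obtain a b where h: "h = P a b" "(a,b) \<in> pb_gens n" "a \<in> S \<or> b \<in> S"
      using hG unfolding Gs_def by blast
    have "(a,b) \<noteq> (i,j)" using h(3) unfolding S_def by auto
    then have "P i j \<star> P a b \<star> iv (P i j) \<in> QS n S \<and> iv (P i j) \<star> P a b \<star> P i j \<in> QS n S"
      unfolding S_def by (rule braid_conj[OF t h(2)])
    then show ?thesis unfolding QG h(1) .
  qed
  have q': "q \<in> generate (PB n) Gs" using q unfolding S_def[symmetric] QG .
  have "P i j \<star> q \<star> iv (P i j) \<in> generate (PB n) Gs \<and> iv (P i j) \<star> q \<star> P i j \<in> generate (PB n) Gs"
    by (rule conj_generate[OF Gc P_carrier[OF t] H q'])
  then show ?thesis unfolding S_def[symmetric] QG .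
qed

lemma letter_cls:
  assumes "fst x \<in> pb_gens n"
  shows "cls [x] = (if snd x then P (fst (fst x)) (snd (fst x)) else iv (P (fst (fst x)) (snd (fst x))))"
proof -
  obtain a b s where x: "x = ((a,b),s)" by (metis prod.collapse)
  show ?thesis using assms P_inv[of a b] unfolding x by (cases s) (auto simp: pbgen_def pg_def pgi_def)
qed

lemma key:
  assumes t: "(i,j) \<in> pb_gens n"
  shows "w \<in> pb_words n \<Longrightarrow> \<exists>q \<in> QS n ({1..n} - {i,j}). cls w = q \<star> (P i j [^]\<^bsub>PB n\<^esub> esum (i,j) w)"
proof (induction w)
  case Nil
  have "\<one>\<^bsub>PB n\<^esub> \<in> QS n ({1..n} - {i,j})" by (rule subgroup.one_closed[OF QS_sub])
  then show ?case
  proof (rule bexI[rotated])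
    show "cls [] = \<one>\<^bsub>PB n\<^esub> \<star> (P i j [^]\<^bsub>PB n\<^esub> esum (i,j) [])" by (simp add: PB_one PB_mult)
  qed
next
  case (Cons x w)
  have xg: "fst x \<in> pb_gens n" and ww: "w \<in> pb_words n" using Cons.prems by (auto simp: pb_words_def)
  obtain q where q: "q \<in> QS n ({1..n} - {i,j})" "cls w = q \<star> (P i j [^]\<^bsub>PB n\<^esub> esum (i,j) w)"
    using Cons.IH[OF ww] by blast
  define Q where "Q = QS n ({1..n} - {i,j})"
  have Qs: "subgroup Q (PB n)" unfolding Q_def by (rule QS_sub)
  have qc: "q \<in> carrier (PB n)" by (rule subgroup.mem_carrier[OF QS_sub q(1)])
  have tc: "P i j \<in> carrier (PB n)" by (rule P_carrier[OF t])
  let ?e = "esum (i,j) w"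
  have pc: "P i j [^]\<^bsub>PB n\<^esub> ?e \<in> carrier (PB n)" using tc by simp
  obtain a b s where x: "x = ((a,b),s)" by (metis prod.collapse)
  have ab: "(a,b) \<in> pb_gens n" using xg x by simp
  have xc: "cls [x] = (if s then P a b else iv (P a b))" using letter_cls[OF xg] x by simp
  have abc: "P a b \<in> carrier (PB n)" by (rule P_carrier[OF ab])
  show ?case
  proof (cases "(a,b) = (i,j)")
    case False
    have "P a b \<in> Q" unfolding Q_def by (rule Q_mem[OF t ab False])
    then have xQ: "cls [x] \<in> Q" using xc subgroup.m_inv_closed[OF Qs] by (cases s) simp_all
    have xcc: "cls [x] \<in> carrier (PB n)" by (rule subgroup.mem_carrier[OF Qs xQ])
    have e: "esum (i,j) (x # w) = ?e" using False x by (simp add: ex_def)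
    have "cls (x # w) = (cls [x] \<star> q) \<star> (P i j [^]\<^bsub>PB n\<^esub> esum (i,j) (x # w))"
      unfolding e cls_cons[of x w] q(2) using xcc qc pc by (simp add: m_assoc)
    moreover have "cls [x] \<star> q \<in> Q" using subgroup.m_closed[OF Qs xQ] q(1) unfolding Q_def by simp
    ultimately show ?thesis unfolding Q_def by blast
  next
    case True
    have nq: "P i j \<star> q \<star> iv (P i j) \<in> Q \<and> iv (P i j) \<star> q \<star> P i j \<in> Q"
      unfolding Q_def by (rule QS_normal[OF t q(1)])
    show ?thesis
    proof (cases s)
      case st: True
      have e: "esum (i,j) (x # w) = 1 + ?e" using True x st by (simp add: ex_def)
      have pw: "P i j [^]\<^bsub>PB n\<^esub> (1 + ?e) = P i j \<star> P i j [^]\<^bsub>PB n\<^esub> ?e"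
        using int_pow_mult[OF tc, of 1 ?e] int_pow_1[OF tc] by simp
      have "cls (x # w) = (P i j \<star> q \<star> iv (P i j)) \<star> (P i j [^]\<^bsub>PB n\<^esub> esum (i,j) (x # w))"
        unfolding e pw cls_cons[of x w] q(2) using xc True st tc qc pc by (simp add: m_assoc)
      then show ?thesis using nq unfolding Q_def by blast
    next
      case sf: False
      have e: "esum (i,j) (x # w) = -1 + ?e" using True x sf by (simp add: ex_def)
      have pw: "P i j [^]\<^bsub>PB n\<^esub> (-1 + ?e) = iv (P i j) \<star> P i j [^]\<^bsub>PB n\<^esub> ?e"
        using int_pow_mult[OF tc, of "-1" ?e] int_pow_neg[OF tc, of 1] int_pow_1[OF tc] by simp
      have "cls (x # w) = (iv (P i j) \<star> q \<star> P i j) \<star> (P i j [^]\<^bsub>PB n\<^esub> esum (i,j) (x # w))"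
        unfolding e pw cls_cons[of x w] q(2) using xc True sf tc qc pc by (simp add: m_assoc)
      then show ?thesis using nq unfolding Q_def by blast
    qed
  qed
qed

lemma zero_in_QS:
  assumes t: "(i,j) \<in> pb_gens n" and w: "w \<in> pb_words n" and e: "esum (i,j) w = 0"
  shows "cls w \<in> QS n ({1..n} - {i,j})"
proof -
  obtain q where q: "q \<in> QS n ({1..n} - {i,j})" "cls w = q \<star> (P i j [^]\<^bsub>PB n\<^esub> esum (i,j) w)"
    using key[OF t w] by blast
  have "q \<in> carrier (PB n)" by (rule subgroup.mem_carrier[OF QS_sub q(1)])
  then show ?thesis using q e by simp
qed


lemma QS_esum:
  assumes y: "y \<in> QS n S"
    and np: "\<And>a b. (a,b) \<in> pb_gens n \<Longrightarrow> a \<in> S \<or> b \<in> S \<Longrightarrow> (a,b) \<noteq> p"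
  shows "\<exists>w\<in>pb_words n. y = cls w \<and> esum p w = 0"
  using y unfolding QS_def
proof (induction rule: generate.induct)
  case one
  show ?case by (rule bexI[of _ "[]"]) (simp_all add: PB_one pb_words_def)
next
  case (incl h)
  then obtain a b where h: "h = P a b" "(a,b) \<in> pb_gens n" "a \<in> S \<or> b \<in> S" by blast
  have "(a,b) \<noteq> p" by (rule np[OF h(2,3)])
  then show ?case using h(1,2)
    by (intro bexI[of _ "[pg a b]"]) (auto simp: pbgen_def pg_def ex_def pb_words_def)
next
  case (inv h)
  then obtain a b where h: "h = P a b" "(a,b) \<in> pb_gens n" "a \<in> S \<or> b \<in> S" by blast
  have "(a,b) \<noteq> p" by (rule np[OF h(2,3)])
  then show ?case using h(1,2) P_inv[OF h(2)]
    by (intro bexI[of _ "[pgi a b]"]) (auto simp: pgi_def ex_def pb_words_def)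
next
  case (eng h1 h2)
  then obtain w1 w2 where "w1 \<in> pb_words n" "h1 = cls w1" "esum p w1 = 0"
    "w2 \<in> pb_words n" "h2 = cls w2" "esum p w2 = 0" by blast
  then show ?case
    by (intro bexI[of _ "w1 @ w2"]) (simp_all add: PB_mult words_app)
qed

lemma esum_cls: "cls u = cls v \<Longrightarrow> esum p u = esum p v"
  unfolding pb_class_eq by (rule esum_eq)

lemma esum_nongen: "w \<in> pb_words n \<Longrightarrow> p \<notin> pb_gens n \<Longrightarrow> esum p w = 0"
  by (induction w) (auto simp: pb_words_def ex_def)

lemma esum_winv: "esum p (winv w) = - esum p w"
  by (induction w) (simp_all add: winv_def)

lemma sign_lemma: "linv x \<notin> set r \<Longrightarrow> (if snd x then 0 \<le> esum (fst x) r else esum (fst x) r \<le> 0)"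
proof (induction r)
  case Nil then show ?case by simp
next
  case (Cons y r)
  have ny: "y \<noteq> linv x" using Cons.prems by auto
  have "fst y = fst x \<Longrightarrow> snd y = snd x"
  proof (rule ccontr)
    assume "fst y = fst x" "snd y \<noteq> snd x"
    then have "y = linv x" by (cases y, cases x) (auto simp: linv_def)
    then show False using ny by simp
  qed
  then show ?case using Cons.IH Cons.prems by (auto simp: ex_def)
qed

lemma zero_derived:
  "w \<in> pb_words n \<Longrightarrow> (\<forall>p. esum p w = 0) \<Longrightarrow> cls w \<in> derived (PB n) (carrier (PB n))"
proof (induction "length w" arbitrary: w rule: less_induct)
  case less
  have Ds: "subgroup (derived (PB n) (carrier (PB n))) (PB n)"
    by (rule derived_is_subgroup) simp
  show ?case
  proof (cases w)
    case Nil
    then show ?thesis using subgroup.one_closed[OF Ds] by (simp add: PB_one)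
  next
    case (Cons x rest)
    have xg: "fst x \<in> pb_gens n" and rw: "rest \<in> pb_words n" using less.prems(1) Cons
      by (auto simp: pb_words_def)
    have ex0: "esum (fst x) w = 0" using less.prems(2) by blast
    have "linv x \<in> set rest"
    proof (rule ccontr)
      assume "linv x \<notin> set rest"
      from sign_lemma[OF this] ex0 Cons show False by (auto simp: ex_def split: if_splits)
    qed
    then obtain u v where rs: "rest = u @ linv x # v" by (meson split_list)
    have uw: "u \<in> pb_words n" and vw: "v \<in> pb_words n" using rw rs by (auto simp: pb_words_def)
    have uv: "u @ v \<in> pb_words n" using uw vw by (rule words_app)
    have e: "\<forall>p. esum p (u @ v) = 0" using less.prems(2) Cons rs by simp
    have IH: "cls (u @ v) \<in> derived (PB n) (carrier (PB n))"
      by (rule less.hyps[OF _ uv e]) (simp add: Cons rs)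
    have xw: "[x] \<in> pb_words n" using xg by (simp add: pb_words_def)
    define g where "g = cls [x]"
    define U where "U = cls u"
    define V where "V = cls v"
    have gc: "g \<in> carrier (PB n)" unfolding g_def by (rule cls_carrier[OF xw])
    have Uc: "U \<in> carrier (PB n)" unfolding U_def by (rule cls_carrier[OF uw])
    have Vc: "V \<in> carrier (PB n)" unfolding V_def by (rule cls_carrier[OF vw])
    have ig: "iv g = cls [linv x]" unfolding g_def PB_inv[OF xw] by (simp add: winv_def)
    have "cls w = g \<star> U \<star> iv g \<star> V" unfolding ig unfolding g_def U_def V_def Cons rs
      by (simp add: PB_mult)
    also have "\<dots> = (g \<star> U \<star> iv g \<star> iv U) \<star> (U \<star> V)"
      using gc Uc Vc by (simp add: m_assoc)
    finally have cw: "cls w = (g \<star> U \<star> iv g \<star> iv U) \<star> (U \<star> V)" .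
    have "g \<star> U \<star> iv g \<star> iv U \<in> derived_set (PB n) (carrier (PB n))"
      using gc Uc by blast
    then have c1: "g \<star> U \<star> iv g \<star> iv U \<in> derived (PB n) (carrier (PB n))"
      unfolding derived_def by (rule generate.incl)
    have c2: "U \<star> V \<in> derived (PB n) (carrier (PB n))"
      using IH unfolding U_def V_def by (simp add: PB_mult)
    show ?thesis unfolding cw by (rule subgroup.m_closed[OF Ds c1 c2])
  qed
qed

lemma derived_sub_QS:
  assumes S: "S \<subseteq> {1..n}" "card S = n - 2" and n2: "n \<ge> 2"
  shows "derived (PB n) (carrier (PB n)) \<subseteq> QS n S"
proof -
  have cD: "card ({1..n} - S) = 2" using S n2 by (simp add: card_Diff_subset finite_subset)
  then obtain x y where xy: "{1..n} - S = {x,y}" "x \<noteq> y" by (auto simp: card_2_iff)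
  define i where "i = min x y"
  define j where "j = max x y"
  have ij: "{x,y} = {i,j}" "i < j" using xy(2) unfolding i_def j_def by (auto simp: min_def max_def)
  have t: "(i,j) \<in> pb_gens n"
  proof -
    have "i \<in> {1..n}" "j \<in> {1..n}" using xy(1) ij(1) by blast+
    then show ?thesis using ij(2) by (simp add: gens_ord)
  qed
  have SS: "S = {1..n} - {i,j}" using xy(1) ij(1) S(1) by blast
  show ?thesis unfolding derived_def
  proof (rule generate_subgroup_incl[OF _ QS_sub])
    show "derived_set (PB n) (carrier (PB n)) \<subseteq> QS n S"
    proof
      fix z assume "z \<in> derived_set (PB n) (carrier (PB n))"
      then obtain h1 h2 where h: "h1 \<in> carrier (PB n)" "h2 \<in> carrier (PB n)"
        "z = h1 \<star> h2 \<star> iv h1 \<star> iv h2" by blast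
      obtain w1 w2 where w: "w1 \<in> pb_words n" "h1 = cls w1" "w2 \<in> pb_words n" "h2 = cls w2"
        using h(1,2) unfolding PB_carrier by blast
      have zw: "z = cls (w1 @ w2 @ winv w1 @ winv w2)"
        unfolding h(3) w(2,4) PB_inv[OF w(1)] PB_inv[OF w(3)] by (simp add: PB_mult)
      have ww: "w1 @ w2 @ winv w1 @ winv w2 \<in> pb_words n"
        by (intro words_app w(1) w(3) winv_words)
      have "esum (i,j) (w1 @ w2 @ winv w1 @ winv w2) = 0" by (simp add: esum_winv)
      then show "z \<in> QS n S" unfolding zw SS by (rule zero_in_QS[OF t ww])
    qed
  qed
qed

end

theorem main_thm:
  fixes n :: nat
  assumes "n \<ge> 2"
  shows "(\<Inter>S \<in> {S. S \<subseteq> {1..n} \<and> card S = n - 2}. QS n S) = derived (PB n) (carrier (PB n))"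
proof
  show "derived (PB n) (carrier (PB n)) \<subseteq> (\<Inter>S \<in> {S. S \<subseteq> {1..n} \<and> card S = n - 2}. QS n S)"
    using pbn.derived_sub_QS[OF _ _ assms] by blast
next
  show "(\<Inter>S \<in> {S. S \<subseteq> {1..n} \<and> card S = n - 2}. QS n S) \<subseteq> derived (PB n) (carrier (PB n))"
  proof
    fix x assume x: "x \<in> (\<Inter>S \<in> {S. S \<subseteq> {1..n} \<and> card S = n - 2}. QS n S)"
    have "{3..n} \<subseteq> {1..n}" "card {3..n} = n - 2" by auto
    then have "x \<in> QS n {3..n}" using x by blast
    then have "x \<in> carrier (PB n)" using subgroup.mem_carrier[OF pbn.QS_sub] by blast
    then obtain w0 where w0: "w0 \<in> pb_words n" "x = pb_class n w0" unfolding PB_carrier by blast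
    have "\<forall>p. esum p w0 = 0"
    proof
      fix p
      show "esum p w0 = 0"
      proof (cases "p \<in> pb_gens n")
        case False then show ?thesis by (rule pbn.esum_nongen[OF w0(1)])
      next
        case True
        obtain i j where p: "p = (i,j)" by (cases p)
        have ij: "1 \<le> i" "i < j" "j \<le> n" using True p by (auto simp: pb_gens_def)
        define S where "S = {1..n} - {i,j}"
        have "card S = n - 2" unfolding S_def using ij by (subst card_Diff_subset) auto
        moreover have "S \<subseteq> {1..n}" unfolding S_def by blast
        ultimately have xS: "x \<in> QS n S" using x by blast
        have "\<And>a b. (a,b) \<in> pb_gens n \<Longrightarrow> a \<in> S \<or> b \<in> S \<Longrightarrow> (a,b) \<noteq> p"
          unfolding S_def p by auto
        then obtain w where w: "w \<in> pb_words n" "x = pb_class n w" "esum p w = 0"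
          using pbn.QS_esum[OF xS] by blast
        have "esum p w0 = esum p w" by (rule pbn.esum_cls[of n]) (use w0 w in simp)
        then show ?thesis using w by simp
      qed
    qed
    then show "x \<in> derived (PB n) (carrier (PB n))" using pbn.zero_derived[OF w0(1)] w0(2) by simp
  qed
qed


theorem corollary2p4:
  fixes n :: nat
  assumes "n \<ge> 2"
  shows "(\<Inter>S \<in> {S. S \<subseteq> {1..n} \<and> card S = n - 2}. QS n S) = derived (PB n) (carrier (PB n))"
  using main_thm[OF assms] .

end
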